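(* Let $L:\mathbb{R}^d\setminus\{0\}\to\mathbb{R}$ be twice differentiable and scale invariant, and $\rho:=\max_{\|x\|_2=1}\|\nabla^2L(x)\|_2<\infty$. For any $x\in\mathbb{R}^d\setminus\{0\}$ and $v\in\mathbb{R}^d$ with $\langle x,v\rangle=0$, $$L(x+v)-L(x)\le\langle v,\nabla L(x)\rangle+\frac{\rho\|v\|_2^2}{2\|x\|_2^2}.$$
   Context: Scale invariant means $L(cx)=L(x)$ for all $c>0$ and $x\ne0$. *)

theory Defs
  imports "HOL-Analysis.Analysis"
begin

definition scale_invariant :: "('a::real_vector \<Rightarrow> real) \<Rightarrow> bool" where
  "scale_invariant L \<longleftrightarrow> (\<forall>c::real. \<forall>x. c > 0 \<longrightarrow> x \<noteq> 0 \<longrightarrow> L (c *\<^sub>R x) = L x)"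

end

theory Submission
  imports Defs
begin

lemma grad_scale:
  fixes L :: "'a::euclidean_space \<Rightarrow> real" and G :: "'a \<Rightarrow> 'a"
  assumes grad: "\<And>y. y \<noteq> 0 \<Longrightarrow> (L has_derivative (\<lambda>h. G y \<bullet> h)) (at y)"
    and scinv: "scale_invariant L" and c: "c > 0" and y: "y \<noteq> 0"
  shows "G (c *\<^sub>R y) = (1/c) *\<^sub>R G y"
proof -
  have cy: "c *\<^sub>R y \<noteq> 0" using c y by simp
  have d1: "((\<lambda>z. L (c *\<^sub>R z)) has_derivative (\<lambda>h. G (c *\<^sub>R y) \<bullet> (c *\<^sub>R h))) (at y)"
    by (rule has_derivative_compose[OF bounded_linear_imp_has_derivative[OF bounded_linear_scaleR_right] grad[OF cy]])
  have d2: "((\<lambda>z. L (c *\<^sub>R z)) has_derivative (\<lambda>h. G y \<bullet> h)) (at y)"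
  proof (rule has_derivative_transform_within_open[OF grad[OF y], of "-{0}"])
    show "open (- {0::'a})" by (simp add: open_Compl)
    show "y \<in> - {0}" using y by simp
    fix z :: 'a assume "z \<in> - {0}"
    then show "L z = L (c *\<^sub>R z)" using scinv c unfolding scale_invariant_def by auto
  qed
  have e: "\<And>h. G (c *\<^sub>R y) \<bullet> (c *\<^sub>R h) = G y \<bullet> h"
    using has_derivative_unique[OF d1 d2] by metis
  have "(c *\<^sub>R G (c *\<^sub>R y) - G y) \<bullet> h = 0" for h
    using e[of h] by (simp add: inner_diff_left)
  then have "c *\<^sub>R G (c *\<^sub>R y) - G y = 0" by (metis inner_eq_zero_iff)
  then have "c *\<^sub>R G (c *\<^sub>R y) = G y" by simp
  then have "(1/c) *\<^sub>R (c *\<^sub>R G (c *\<^sub>R y)) = (1/c) *\<^sub>R G y" by simp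
  then show ?thesis using c by simp
qed

lemma hess_scale:
  fixes L :: "'a::euclidean_space \<Rightarrow> real" and G :: "'a \<Rightarrow> 'a"
  assumes grad: "\<And>y. y \<noteq> 0 \<Longrightarrow> (L has_derivative (\<lambda>h. G y \<bullet> h)) (at y)"
    and hess: "\<And>y. y \<noteq> 0 \<Longrightarrow> (G has_derivative H y) (at y)"
    and scinv: "scale_invariant L" and c: "c > 0" and y: "y \<noteq> 0"
  shows "H (c *\<^sub>R y) h = (1/c^2) *\<^sub>R H y h"
proof -
  have cy: "c *\<^sub>R y \<noteq> 0" using c y by simp
  have d1: "((\<lambda>z. G (c *\<^sub>R z)) has_derivative (\<lambda>h. H (c *\<^sub>R y) (c *\<^sub>R h))) (at y)"
    by (rule has_derivative_compose[OF bounded_linear_imp_has_derivative[OF bounded_linear_scaleR_right] hess[OF cy]])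
  have d2: "((\<lambda>z. G (c *\<^sub>R z)) has_derivative (\<lambda>h. (1/c) *\<^sub>R H y h)) (at y)"
  proof (rule has_derivative_transform_within_open[OF has_derivative_scaleR_right[OF hess[OF y]], of "-{0}"])
    show "open (- {0::'a})" by (simp add: open_Compl)
    show "y \<in> - {0}" using y by simp
    fix z :: 'a assume "z \<in> - {0}"
    then show "(1/c) *\<^sub>R G z = G (c *\<^sub>R z)" using grad_scale[OF grad scinv c] by auto
  qed
  have e: "\<And>h. H (c *\<^sub>R y) (c *\<^sub>R h) = (1/c) *\<^sub>R H y h"
    using has_derivative_unique[OF d1 d2] by metis
  have lin: "linear (H (c *\<^sub>R y))" using has_derivative_linear[OF hess[OF cy]] .
  have lin2: "linear (H y)" using has_derivative_linear[OF hess[OF y]] .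
  have "H (c *\<^sub>R y) h = H (c *\<^sub>R y) (c *\<^sub>R ((1/c) *\<^sub>R h))" using c by simp
  also have "\<dots> = (1/c) *\<^sub>R H y ((1/c) *\<^sub>R h)" by (rule e)
  also have "\<dots> = (1/c^2) *\<^sub>R H y h" using linear_cmul[OF lin2] by (simp add: power2_eq_square)
  finally show ?thesis .
qed

theorem mainTheorem4:
  fixes L :: "'a::euclidean_space \<Rightarrow> real"
    and G :: "'a \<Rightarrow> 'a"
    and H :: "'a \<Rightarrow> 'a \<Rightarrow> 'a"
    and \<rho> :: real and x v :: 'a
  assumes grad: "\<And>y. y \<noteq> 0 \<Longrightarrow> (L has_derivative (\<lambda>h. G y \<bullet> h)) (at y)"
    and hess: "\<And>y. y \<noteq> 0 \<Longrightarrow> (G has_derivative H y) (at y)"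
    and scinv: "scale_invariant L"
    and bdd: "bdd_above ((\<lambda>y. onorm (H y)) ` sphere 0 1)"
    and rho: "\<rho> = (SUP y\<in>sphere 0 1. onorm (H y))"
    and x: "x \<noteq> 0"
    and orth: "x \<bullet> v = 0"
  shows "L (x + v) - L x \<le> v \<bullet> G x + \<rho> * (norm v)\<^sup>2 / (2 * (norm x)\<^sup>2)"
proof -
  have rho_ge: "onorm (H u) \<le> \<rho>" if "norm u = 1" for u
    unfolding rho by (rule cSUP_upper[OF _ bdd]) (use that in simp)
  obtain b :: 'a where b: "b \<in> Basis" using nonempty_Basis by blast
  have rho0: "0 \<le> \<rho>"
    using rho_ge[of b] onorm_pos_le[OF has_derivative_bounded_linear[OF hess[of b]]] b
    by (metis norm_Basis norm_zero zero_neq_one order_trans)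
  have Hbound: "norm (H y h) \<le> \<rho> / (norm y)^2 * norm h" if y: "y \<noteq> 0" for y h
  proof -
    define u where "u = (1 / norm y) *\<^sub>R y"
    have nu: "norm u = 1" using y by (simp add: u_def)
    then have u0: "u \<noteq> 0" by auto
    have yu: "y = norm y *\<^sub>R u" using y by (simp add: u_def)
    have "H y h = (1/(norm y)^2) *\<^sub>R H u h"
      using hess_scale[OF grad hess scinv _ u0, of "norm y" h] y yu by simp
    then have "norm (H y h) = norm (H u h) / (norm y)^2" by simp
    also have "\<dots> \<le> onorm (H u) * norm h / (norm y)^2"
      by (rule divide_right_mono[OF onorm[OF has_derivative_bounded_linear[OF hess[OF u0]]]]) simp
    also have "\<dots> \<le> \<rho> * norm h / (norm y)^2"
      by (intro divide_right_mono mult_right_mono rho_ge nu) auto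
    finally show ?thesis by simp
  qed
  define K where "K = \<rho> * (norm v)^2 / (norm x)^2"
  have nz: "x + t *\<^sub>R v \<noteq> 0" for t
  proof
    assume "x + t *\<^sub>R v = 0"
    then have "x \<bullet> (x + t *\<^sub>R v) = 0" by simp
    then have "x \<bullet> x = 0" using orth by (simp add: inner_add_right)
    then show False using x by simp
  qed
  have nrm: "(norm x)^2 \<le> (norm (x + t *\<^sub>R v))^2" for t
  proof -
    have "(norm (x + t *\<^sub>R v))^2 = (norm x)^2 + t^2 * (norm v)^2"
      using orth by (simp only: power2_norm_eq_inner inner_add_left inner_add_right inner_scaleR_left inner_scaleR_right inner_commute[of v x]) (simp add: power2_eq_square)
    then show ?thesis by simp
  qed
  have Hv: "H (x + t *\<^sub>R v) v \<bullet> v \<le> K" for t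
  proof -
    have "H (x + t *\<^sub>R v) v \<bullet> v \<le> norm (H (x + t *\<^sub>R v) v) * norm v"
      by (metis Cauchy_Schwarz_ineq2 abs_le_iff)
    also have "\<dots> \<le> \<rho> / (norm (x + t *\<^sub>R v))^2 * norm v * norm v"
      by (intro mult_right_mono Hbound nz) auto
    also have "\<dots> \<le> \<rho> / (norm x)^2 * norm v * norm v"
      using x rho0 nrm[of t] nz[of t] by (intro mult_right_mono divide_left_mono) auto
    finally show ?thesis by (simp add: K_def power2_eq_square)
  qed
  define \<psi> where "\<psi> t = G (x + t *\<^sub>R v) \<bullet> v" for t
  have dpath: "((\<lambda>s. x + s *\<^sub>R v) has_derivative (\<lambda>s. s *\<^sub>R v)) (at t)" for t
    by (auto intro!: derivative_eq_intros)
  have dpsi: "(\<psi> has_real_derivative (H (x + t *\<^sub>R v) v \<bullet> v)) (at t)" for t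
  proof -
    have "((\<lambda>s. G (x + s *\<^sub>R v)) has_derivative (\<lambda>s. H (x + t *\<^sub>R v) (s *\<^sub>R v))) (at t)"
      by (rule has_derivative_compose[OF dpath hess[OF nz]])
    then have "(\<psi> has_derivative (\<lambda>s. H (x + t *\<^sub>R v) (s *\<^sub>R v) \<bullet> v)) (at t)"
      unfolding \<psi>_def by (auto intro!: derivative_eq_intros)
    moreover have "(\<lambda>s. H (x + t *\<^sub>R v) (s *\<^sub>R v) \<bullet> v) = (\<lambda>s. s * (H (x + t *\<^sub>R v) v \<bullet> v))"
      using linear_cmul[OF has_derivative_linear[OF hess[OF nz]]] by auto
    ultimately show ?thesis unfolding has_field_derivative_def by (simp add: mult.commute[of _ "H (x + t *\<^sub>R v) v \<bullet> v"])
  qed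
  have psi_le: "\<psi> t - \<psi> 0 \<le> t * K" if "0 \<le> t" for t
  proof -
    have "(\<lambda>s. s * K - \<psi> s) 0 \<le> (\<lambda>s. s * K - \<psi> s) t"
    proof (rule DERIV_nonneg_imp_nondecreasing[OF that])
      fix s :: real
      show "\<exists>y. ((\<lambda>s. s * K - \<psi> s) has_real_derivative y) (at s) \<and> 0 \<le> y"
        using Hv[of s] by (intro exI[of _ "K - H (x + s *\<^sub>R v) v \<bullet> v"])
          (auto intro!: derivative_eq_intros dpsi)
    qed
    then show ?thesis by simp
  qed
  define \<phi> where "\<phi> t = L (x + t *\<^sub>R v) - t * (v \<bullet> G x) - t^2 / 2 * K" for t
  have dL: "((\<lambda>s. L (x + s *\<^sub>R v)) has_real_derivative \<psi> t) (at t)" for t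
  proof -
    have "((\<lambda>s. L (x + s *\<^sub>R v)) has_derivative (\<lambda>s. G (x + t *\<^sub>R v) \<bullet> (s *\<^sub>R v))) (at t)"
      by (rule has_derivative_compose[OF dpath grad[OF nz]])
    then show ?thesis
      unfolding has_field_derivative_def \<psi>_def by (simp add: mult.commute[of _ "G (x + t *\<^sub>R v) \<bullet> v"])
  qed
  have "\<phi> 1 \<le> \<phi> 0"
  proof (rule DERIV_nonpos_imp_nonincreasing[of 0 1])
    fix s :: real assume s: "0 \<le> s" "s \<le> 1"
    show "\<exists>y. (\<phi> has_real_derivative y) (at s) \<and> y \<le> 0"
    proof (intro exI conjI)
      show "(\<phi> has_real_derivative (\<psi> s - v \<bullet> G x - s * K)) (at s)"
        unfolding \<phi>_def[abs_def]
        by (auto intro!: derivative_eq_intros dL simp: power2_eq_square)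
      show "\<psi> s - v \<bullet> G x - s * K \<le> 0"
        using psi_le[OF s(1)] by (simp add: \<psi>_def inner_commute)
    qed
  qed simp
  then show ?thesis
    using x by (simp add: \<phi>_def K_def field_simps)
qed

end
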